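(* Let $X$ be a set, $\mathcal{F}\subseteq\mathcal{P}(X)$ a $\sigma$-field, and $\mu:\mathcal{F}\to[0,1]$ a countably subadditive set function with $\mu(\emptyset)=0$. Then the pseudometric space $(\mathcal{F}, d_\mu)$, where $d_\mu(A,B):=\mu(A\triangle B)$, is complete.
   Context: $\mu$ is countably subadditive if for any $A,A_1,A_2,\ldots\in\mathcal{F}$, $I_A\le\sum_{k=1}^\infty I_{A_k}$ implies $\mu(A)\le\sum_{k=1}^\infty\mu(A_k)$, where $I_B$ denotes the indicator function of $B$. *)

theory Defs
  imports "HOL-Analysis.Analysis"
begin

text \<open>Sums are taken in ennreal, so divergent sums are allowed.\<close>
definition countably_subadditive :: "'a set set \<Rightarrow> ('a set \<Rightarrow> real) \<Rightarrow> bool" where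
  "countably_subadditive F \<mu> \<longleftrightarrow>
     (\<forall>A (As :: nat \<Rightarrow> 'a set). A \<in> F \<longrightarrow> range As \<subseteq> F \<longrightarrow>
        (\<forall>x. (indicator A x :: ennreal) \<le> (\<Sum>k. indicator (As k) x)) \<longrightarrow>
        ennreal (\<mu> A) \<le> (\<Sum>k. ennreal (\<mu> (As k))))"

definition symdiff :: "'a set \<Rightarrow> 'a set \<Rightarrow> 'a set" where
  "symdiff A B = (A - B) \<union> (B - A)"

definition dmu :: "('a set \<Rightarrow> real) \<Rightarrow> 'a set \<Rightarrow> 'a set \<Rightarrow> real" where
  "dmu \<mu> A B = \<mu> (symdiff A B)"

definition pseudometric_complete :: "'b set \<Rightarrow> ('b \<Rightarrow> 'b \<Rightarrow> real) \<Rightarrow> bool" where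
  "pseudometric_complete F d \<longleftrightarrow>
     (\<forall>S :: nat \<Rightarrow> 'b. range S \<subseteq> F \<longrightarrow>
        (\<forall>e>0. \<exists>N. \<forall>m\<ge>N. \<forall>n\<ge>N. d (S m) (S n) < e) \<longrightarrow>
        (\<exists>L\<in>F. (\<lambda>n. d (S n) L) \<longlonglongrightarrow> 0))"

end

theory Submission
  imports Defs
begin

lemma ennreal_term_le_suminf: "(f k :: ennreal) \<le> (\<Sum>i. f i)"
proof -
  have "(\<Sum>i\<in>{k}. f i) \<le> (\<Sum>i. f i)"
    by (rule sum_le_suminf[OF summableI]) auto
  thus ?thesis by simp
qed

lemma subadd2:
  assumes cs: "countably_subadditive F \<mu>" and sa: "sigma_algebra X F"
    and nn: "\<forall>A\<in>F. 0 \<le> \<mu> A" and e: "\<mu> {} = 0"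
    and A: "A \<in> F" and B: "B \<in> F" and C: "C \<in> F" and sub: "A \<subseteq> B \<union> C"
  shows "\<mu> A \<le> \<mu> B + \<mu> C"
proof -
  define As where "As = (\<lambda>k::nat. if k = 0 then B else if k = 1 then C else {})"
  have emp: "{} \<in> F" proof - interpret sigma_algebra X F by (rule sa) show ?thesis by simp qed
  have r: "range As \<subseteq> F" using B C emp by (auto simp: As_def)
  have ind: "(indicator A x :: ennreal) \<le> (\<Sum>k. indicator (As k) x)" for x
  proof (cases "x \<in> A")
    case True
    have "x \<in> As 0 \<or> x \<in> As 1" using sub True by (auto simp: As_def)
    then obtain k where "x \<in> As k" by blast
    hence "(indicator (As k) x :: ennreal) = 1" by simp
    moreover have "(indicator (As k) x :: ennreal) \<le> (\<Sum>k. indicator (As k) x)"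
      by (rule ennreal_term_le_suminf)
    ultimately show ?thesis using True by simp
  qed simp
  have "ennreal (\<mu> A) \<le> (\<Sum>k. ennreal (\<mu> (As k)))"
    using cs A r ind unfolding countably_subadditive_def by blast
  also have "(\<Sum>k. ennreal (\<mu> (As k))) = (\<Sum>k\<in>{..<2}. ennreal (\<mu> (As k)))"
    by (rule suminf_finite) (auto simp: As_def e)
  also have "\<dots> = ennreal (\<mu> B + \<mu> C)"
    using nn B C by (simp add: As_def numeral_2_eq_2 ennreal_plus)
  finally have "ennreal (\<mu> A) \<le> ennreal (\<mu> B + \<mu> C)" .
  moreover have "0 \<le> \<mu> B + \<mu> C" using nn B C by auto
  ultimately show ?thesis by (simp only: ennreal_le_iff)
qed

theorem proposition3p4:
  fixes X :: "'a set" and F :: "'a set set" and \<mu> :: "'a set \<Rightarrow> real"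
  assumes "sigma_algebra X F"
    and "\<forall>A\<in>F. 0 \<le> \<mu> A \<and> \<mu> A \<le> 1"
    and "countably_subadditive F \<mu>"
    and "\<mu> {} = 0"
  shows "pseudometric_complete F (dmu \<mu>)"
  unfolding pseudometric_complete_def
proof (intro allI impI)
  note sa = assms(1) and cs = assms(3) and e = assms(4)
  have nn: "\<forall>A\<in>F. 0 \<le> \<mu> A" using assms(2) by blast
  have symF: "symdiff A B \<in> F" if "A \<in> F" "B \<in> F" for A B
  proof - interpret sigma_algebra X F by (rule sa) show ?thesis using that unfolding symdiff_def by auto qed
  fix S :: "nat \<Rightarrow> 'a set"
  assume SF: "range S \<subseteq> F"
    and cau: "\<forall>e>0. \<exists>N. \<forall>m\<ge>N. \<forall>n\<ge>N. dmu \<mu> (S m) (S n) < e"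
  have "\<forall>k::nat. \<exists>N. \<forall>m\<ge>N. \<forall>n\<ge>N. dmu \<mu> (S m) (S n) < (1/2)^k"
    using cau by simp
  then obtain N where N: "\<And>k m n. m \<ge> N k \<Longrightarrow> n \<ge> N k \<Longrightarrow> dmu \<mu> (S m) (S n) < (1/2)^k"
    by metis
  define M where "M k = (\<Sum>i\<le>k. N i)" for k
  have MN: "N k \<le> M k" for k
    unfolding M_def by (rule member_le_sum) auto
  have Mmono: "M k \<le> M (k + i)" for k i
    unfolding M_def by (rule sum_mono2) auto
  have SMF: "S (M k) \<in> F" for k using SF by auto
  define L where "L = (\<Inter>i. \<Union>k\<in>{i..}. S (M k))"
  have LF: "L \<in> F"
    unfolding L_def
    by (rule sigma_algebra.countable_INT[OF sa]) (auto intro!: sigma_algebra.countable_UN[OF sa] SMF)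
  have step: "\<mu> (symdiff (S (M k)) (S (M (Suc k)))) < (1/2)^k" for k
    using N[of k "M k" "M (Suc k)"] MN[of k] Mmono[of k 1] by (simp add: dmu_def)
  have tail: "\<mu> (symdiff (S (M j)) L) \<le> 2 * (1/2)^j" for j
  proof -
    define As where "As k = symdiff (S (M (j + k))) (S (M (Suc (j + k))))" for k
    have r: "range As \<subseteq> F" using symF SMF by (auto simp: As_def)
    have ind: "(indicator (symdiff (S (M j)) L) x :: ennreal) \<le> (\<Sum>k. indicator (As k) x)" for x
    proof (cases "x \<in> symdiff (S (M j)) L")
      case True
      have "\<exists>k. x \<in> As k"
      proof (rule ccontr)
        assume "\<not> ?thesis"
        hence eq: "(x \<in> S (M (j + k))) = (x \<in> S (M (Suc (j + k))))" for k
          by (auto simp: As_def symdiff_def)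
        have c: "(x \<in> S (M (j + k))) = (x \<in> S (M j))" for k
          by (induction k) (use eq in auto)
        have c2: "(x \<in> S (M k)) = (x \<in> S (M j))" if "k \<ge> j" for k
          using c[of "k - j"] that by simp
        have "(x \<in> L) = (x \<in> S (M j))"
        proof
          assume "x \<in> L"
          then obtain k where "k \<ge> j" "x \<in> S (M k)" unfolding L_def by blast
          thus "x \<in> S (M j)" using c2 by blast
        next
          assume h: "x \<in> S (M j)"
          show "x \<in> L" unfolding L_def
          proof
            fix i
            have "x \<in> S (M (max i j))" using c2[of "max i j"] h by simp
            thus "x \<in> (\<Union>k\<in>{i..}. S (M k))" by auto
          qed
        qed
        thus False using True by (auto simp: symdiff_def)
      qed
      then obtain k where "x \<in> As k" by blast
      hence "(indicator (As k) x :: ennreal) = 1" by simp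
      moreover have "(indicator (As k) x :: ennreal) \<le> (\<Sum>k. indicator (As k) x)"
        by (rule ennreal_term_le_suminf)
      ultimately show ?thesis using True by simp
    qed simp
    have "ennreal (\<mu> (symdiff (S (M j)) L)) \<le> (\<Sum>k. ennreal (\<mu> (As k)))"
      using cs symF[OF SMF LF] r ind unfolding countably_subadditive_def by blast
    also have "\<dots> \<le> (\<Sum>k. ennreal ((1/2)^(j+k)))"
      by (rule suminf_le) (use step in \<open>auto simp: As_def less_imp_le\<close>)
    also have "\<dots> = ennreal (2 * (1/2)^j)"
    proof (rule suminf_ennreal_eq)
      show "(\<lambda>k. (1/2::real)^(j+k)) sums (2 * (1/2)^j)"
        using sums_mult[OF geometric_sums[of "1/2::real"], of "(1/2)^j"]
        by (simp add: power_add mult.commute)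
    qed simp
    finally show ?thesis by (simp add: ennreal_le_iff)
  qed
  show "\<exists>L\<in>F. (\<lambda>n. dmu \<mu> (S n) L) \<longlonglongrightarrow> 0"
  proof (intro bexI[OF _ LF] LIMSEQ_I)
    fix r :: real assume r: "r > 0"
    obtain j where j: "(1/2::real)^j < r / 3"
      using real_arch_pow_inv[of "r/3" "1/2::real"] r by auto
    show "\<exists>no. \<forall>n\<ge>no. norm (dmu \<mu> (S n) L - 0) < r"
    proof (intro exI allI impI)
      fix n assume n: "n \<ge> M j"
      have SnF: "S n \<in> F" using SF by auto
      have "symdiff (S n) L \<subseteq> symdiff (S n) (S (M j)) \<union> symdiff (S (M j)) L"
        by (auto simp: symdiff_def)
      hence "\<mu> (symdiff (S n) L) \<le> \<mu> (symdiff (S n) (S (M j))) + \<mu> (symdiff (S (M j)) L)"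
        by (intro subadd2[OF cs sa nn e] symF SnF SMF LF)
      moreover have "\<mu> (symdiff (S n) (S (M j))) < (1/2)^j"
        using N[of j n "M j"] n MN[of j] by (simp add: dmu_def)
      moreover have "0 \<le> \<mu> (symdiff (S n) L)" using nn symF[OF SnF LF] by blast
      ultimately show "norm (dmu \<mu> (S n) L - 0) < r"
        using tail[of j] j by (simp add: dmu_def)
    qed
  qed
qed

end
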